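(* The free commutative unitary Rota--Baxter algebra $\text{Ш}(x)$ of weight $1$ generated by $x$ is a Hopf algebra $(\text{Ш}(x),\diamond,\mu,\Delta,\epsilon,S)$, where: (1) $\diamond$ is the augmented mixable shuffle product; (2) $\mu:\mathbf k\to\text{Ш}(x)$, $c\mapsto c$; (3) for every sequence $(a,\alpha_1,\dots,\alpha_k)$ of nonnegative integers, $$\Delta\big(x^{\otimes(a,\alpha_1,\dots,\alpha_k)}\big)=\sum_{i=0}^k\sum_{p=0}^a\binom{a}{p}\,x^{\otimes(p,\alpha_1,\dots,\alpha_i)}\otimes x^{\otimes(a-p,\alpha_{i+1},\dots,\alpha_k)};$$ (4) $\epsilon$ is the $\mathbf k$-linear map with $\epsilon(w)=\delta_{1,w}$ for each basis element $w=x^{\otimes(a,\alpha_1,\dots,\alpha_k)}$ (i.e. $\epsilon(w)=1$ if $w=1=x^0\in\mathbf k[x]$ and $0$ otherwise); (5) the antipode is $$S\big(x^{\otimes(a,\alpha_1,\dots,\alpha_k)}\big)=(-1)^{a+k}x^a\otimes\sum_{(i_1,\dots,i_r)\models k}x^{\otimes(\alpha_k+\cdots+\alpha_{k-i_1+1},\,\dots,\,\alpha_{i_r}+\cdots+\alpha_1)},$$ where the inner sequence is obtained from $(\alpha_k,\alpha_{k-1},\dots,\alpha_1)$ by summing consecutive blocks of sizes $i_1,\dots,i_r$.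
   Context: $\mathbf{k}$ is a commutative ring containing $\mathbb{Q}$. For a sequence $\gamma=(\gamma_0,\dots,\gamma_k)$ of nonnegative integers, $x^{\otimes\gamma}=x^{\gamma_0}\otimes\cdots\otimes x^{\gamma_k}$; conventions: $x^{\otimes(p,\alpha_1,\dots,\alpha_i)}=x^p$ when $i=0$, and $x^{\otimes(a-p,\alpha_{i+1},\dots,\alpha_k)}=x^{a-p}$ when $i=k$. $\text{Ш}^+(x)=\bigoplus_{k\ge0}\mathbf k[x]^{\otimes k}$ (with $\mathbf k[x]^{\otimes0}=\mathbf k$) carries the mixable shuffle product of weight 1: $1*\mathfrak a=\mathfrak a*1=\mathfrak a$, $(a_1\otimes\mathfrak a')*(b_1\otimes\mathfrak b')=a_1\otimes(\mathfrak a'*(b_1\otimes\mathfrak b'))+b_1\otimes((a_1\otimes\mathfrak a')*\mathfrak b')+(a_1b_1)\otimes(\mathfrak a'*\mathfrak b')$. $\text{Ш}(x)=\mathbf k[x]\otimes\text{Ш}^+(x)=\bigoplus_{k\ge1}\mathbf k[x]^{\otimes k}$ with the augmented mixable shuffle product $(a_0\otimes\mathfrak a)\diamond(b_0\otimes\mathfrak b)=(a_0b_0)\otimes(\mathfrak a*\mathfrak b)$ (writing $a_0\otimes1=a_0$) and Rota--Baxter operator $\mathfrak a\mapsto1\otimes\mathfrak a$; it is the free commutative unitary Rota--Baxter algebra of weight 1 on $x$. A composition $(i_1,\dots,i_r)\models k$ is a sequence of positive integers summing to $k$ (for $k=0$ only the empty one). *)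

theory Defs
  imports Main "HOL-Library.Poly_Mapping" "HOL-Library.Multiset"
begin

text \<open>A free k-module with basis 'b is modelled as the finitely supported
functions 'b =>0 'k.  Tensor products of free modules are free modules on
the product of the bases.\<close>

definition pm_smult :: "'k::comm_ring_1 \<Rightarrow> ('b \<Rightarrow>\<^sub>0 'k) \<Rightarrow> ('b \<Rightarrow>\<^sub>0 'k)" where
  "pm_smult c f = Poly_Mapping.map (\<lambda>x. c * x) f"

definition lin :: "('b \<Rightarrow> ('c \<Rightarrow>\<^sub>0 'k::comm_ring_1)) \<Rightarrow> ('b \<Rightarrow>\<^sub>0 'k) \<Rightarrow> ('c \<Rightarrow>\<^sub>0 'k)" where
  "lin F f = (\<Sum>u\<in>Poly_Mapping.keys f. pm_smult (Poly_Mapping.lookup f u) (F u))"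

definition bilin :: "('b \<Rightarrow> 'c \<Rightarrow> ('d \<Rightarrow>\<^sub>0 'k::comm_ring_1)) \<Rightarrow> ('b \<Rightarrow>\<^sub>0 'k) \<Rightarrow> ('c \<Rightarrow>\<^sub>0 'k) \<Rightarrow> ('d \<Rightarrow>\<^sub>0 'k)" where
  "bilin F f g = (\<Sum>u\<in>Poly_Mapping.keys f. \<Sum>v\<in>Poly_Mapping.keys g.
      pm_smult (Poly_Mapping.lookup f u * Poly_Mapping.lookup g v) (F u v))"

definition tens :: "('b \<Rightarrow>\<^sub>0 'k::comm_ring_1) \<Rightarrow> ('c \<Rightarrow>\<^sub>0 'k) \<Rightarrow> ('b \<times> 'c \<Rightarrow>\<^sub>0 'k)" where
  "tens f g = bilin (\<lambda>u v. Poly_Mapping.single (u, v) 1) f g"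

definition tmap :: "('b \<Rightarrow> ('d \<Rightarrow>\<^sub>0 'k::comm_ring_1)) \<Rightarrow> ('c \<Rightarrow> ('e \<Rightarrow>\<^sub>0 'k)) \<Rightarrow> ('b \<times> 'c \<Rightarrow>\<^sub>0 'k) \<Rightarrow> ('d \<times> 'e \<Rightarrow>\<^sub>0 'k)" where
  "tmap F G = lin (\<lambda>(u, v). tens (F u) (G v))"

definition mset_pm :: "'b multiset \<Rightarrow> ('b \<Rightarrow>\<^sub>0 'k::comm_ring_1)" where
  "mset_pm M = (\<Sum>w\<in>set_mset M. Poly_Mapping.single w (of_nat (count M w)))"

text \<open>A basis element x^{\<otimes>(a, \<alpha>_1,...,\<alpha>_k)} of Sha(x) = k[x]^{\<otimes>(k+1)}
is represented by the pair (a, [\<alpha>_1,...,\<alpha>_k]).  A basis element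
x^{\<alpha>_1} \<otimes> ... \<otimes> x^{\<alpha>_k} of Sha^+(x) is represented by the list
[\<alpha>_1,...,\<alpha>_k] (the empty list being 1 \<in> k).\<close>

type_synonym sha_word = "nat \<times> nat list"

text \<open>Mixable shuffle product of weight 1 of basis elements of Sha^+(x),
as a multiset of basis elements (all coefficients are nonnegative integers).\<close>
fun msh :: "nat list \<Rightarrow> nat list \<Rightarrow> nat list multiset" where
  "msh [] ys = {#ys#}"
| "msh xs [] = {#xs#}"
| "msh (a # as) (b # bs) =
     image_mset ((#) a) (msh as (b # bs))
   + image_mset ((#) b) (msh (a # as) bs)
   + image_mset ((#) (a + b)) (msh as bs)"

definition sha_mult_basis :: "sha_word \<Rightarrow> sha_word \<Rightarrow> (sha_word \<Rightarrow>\<^sub>0 'k::comm_ring_1)" where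
  "sha_mult_basis u v = mset_pm (image_mset (\<lambda>\<gamma>. (fst u + fst v, \<gamma>)) (msh (snd u) (snd v)))"

definition sha_mult :: "(sha_word \<Rightarrow>\<^sub>0 'k::comm_ring_1) \<Rightarrow> (sha_word \<Rightarrow>\<^sub>0 'k) \<Rightarrow> (sha_word \<Rightarrow>\<^sub>0 'k)"
  (infixl \<open>\<diamondop>\<close> 70) where
  "f \<diamondop> g = bilin sha_mult_basis f g"

definition sha_unit :: "'k::comm_ring_1 \<Rightarrow> (sha_word \<Rightarrow>\<^sub>0 'k)" where
  "sha_unit c = Poly_Mapping.single (0, []) c"

definition sha_coprod_basis :: "sha_word \<Rightarrow> (sha_word \<times> sha_word \<Rightarrow>\<^sub>0 'k::comm_ring_1)" where
  "sha_coprod_basis w = (case w of (a, \<alpha>) \<Rightarrow>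
     (\<Sum>i\<in>{0..length \<alpha>}. \<Sum>p\<in>{0..a}.
        Poly_Mapping.single ((p, take i \<alpha>), (a - p, drop i \<alpha>)) (of_nat (a choose p))))"

definition sha_coprod :: "(sha_word \<Rightarrow>\<^sub>0 'k::comm_ring_1) \<Rightarrow> (sha_word \<times> sha_word \<Rightarrow>\<^sub>0 'k)" where
  "sha_coprod = lin sha_coprod_basis"

definition sha_counit_basis :: "sha_word \<Rightarrow> 'k::comm_ring_1" where
  "sha_counit_basis w = (if w = (0, []) then 1 else 0)"

definition sha_counit :: "(sha_word \<Rightarrow>\<^sub>0 'k::comm_ring_1) \<Rightarrow> 'k" where
  "sha_counit f = (\<Sum>u\<in>Poly_Mapping.keys f. Poly_Mapping.lookup f u * sha_counit_basis u)"

definition compositions :: "nat \<Rightarrow> nat list set" where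
  "compositions k = {c. (\<forall>i\<in>set c. 0 < i) \<and> sum_list c = k}"

fun block_sums :: "nat list \<Rightarrow> nat list \<Rightarrow> nat list" where
  "block_sums [] ys = []"
| "block_sums (i # is) ys = sum_list (take i ys) # block_sums is (drop i ys)"

definition sha_antipode_basis :: "sha_word \<Rightarrow> (sha_word \<Rightarrow>\<^sub>0 'k::comm_ring_1)" where
  "sha_antipode_basis w = (case w of (a, \<alpha>) \<Rightarrow>
     pm_smult ((-1) ^ (a + length \<alpha>))
       (\<Sum>c\<in>compositions (length \<alpha>). Poly_Mapping.single (a, block_sums c (rev \<alpha>)) 1))"

definition sha_antipode :: "(sha_word \<Rightarrow>\<^sub>0 'k::comm_ring_1) \<Rightarrow> (sha_word \<Rightarrow>\<^sub>0 'k)" where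
  "sha_antipode = lin sha_antipode_basis"

definition tens_mult_basis :: "('b \<Rightarrow> 'b \<Rightarrow> ('b \<Rightarrow>\<^sub>0 'k::comm_ring_1)) \<Rightarrow> 'b \<times> 'b \<Rightarrow> 'b \<times> 'b \<Rightarrow> ('b \<times> 'b \<Rightarrow>\<^sub>0 'k)" where
  "tens_mult_basis M x y = tens (M (fst x) (fst y)) (M (snd x) (snd y))"

definition assoc_iso :: "(('b \<times> 'b) \<times> 'b \<Rightarrow>\<^sub>0 'k::comm_ring_1) \<Rightarrow> ('b \<times> ('b \<times> 'b) \<Rightarrow>\<^sub>0 'k)" where
  "assoc_iso = lin (\<lambda>((u, v), w). Poly_Mapping.single (u, (v, w)) 1)"

definition is_hopf_algebra ::
  "('b \<Rightarrow> 'b \<Rightarrow> ('b \<Rightarrow>\<^sub>0 'k::comm_ring_1)) \<Rightarrow> ('b \<Rightarrow>\<^sub>0 'k) \<Rightarrow>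
   ('b \<Rightarrow> ('b \<times> 'b \<Rightarrow>\<^sub>0 'k)) \<Rightarrow> ('b \<Rightarrow> 'k) \<Rightarrow> ('b \<Rightarrow> ('b \<Rightarrow>\<^sub>0 'k)) \<Rightarrow> bool" where
  "is_hopf_algebra M e D E S \<longleftrightarrow>
    (let m = bilin M; \<Delta> = lin D; \<epsilon> = (\<lambda>f. \<Sum>u\<in>Poly_Mapping.keys f. Poly_Mapping.lookup f u * E u);
         u = (\<lambda>c. pm_smult c e); S' = lin S; id' = (\<lambda>w. Poly_Mapping.single w 1) in
      \<comment> \<open>algebra\<close>
      (\<forall>f g h. m (m f g) h = m f (m g h)) \<and>
      (\<forall>f. m e f = f \<and> m f e = f) \<and>
      \<comment> \<open>coalgebra\<close>
      (\<forall>f. assoc_iso (tmap D id' (\<Delta> f)) = tmap id' D (\<Delta> f)) \<and>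
      (\<forall>f. lin (\<lambda>(v, w). pm_smult (E v) (id' w)) (\<Delta> f) = f \<and>
           lin (\<lambda>(v, w). pm_smult (E w) (id' v)) (\<Delta> f) = f) \<and>
      \<comment> \<open>compatibility: \<Delta> and \<epsilon> are algebra morphisms\<close>
      (\<forall>f g. \<Delta> (m f g) = bilin (tens_mult_basis M) (\<Delta> f) (\<Delta> g)) \<and>
      \<Delta> e = tens e e \<and>
      (\<forall>f g. \<epsilon> (m f g) = \<epsilon> f * \<epsilon> g) \<and>
      \<epsilon> e = 1 \<and>
      \<comment> \<open>antipode\<close>
      (\<forall>f. lin (\<lambda>(v, w). m (S v) (id' w)) (\<Delta> f) = u (\<epsilon> f) \<and>
           lin (\<lambda>(v, w). m (id' v) (S w)) (\<Delta> f) = u (\<epsilon> f)))"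

end

theory Submission
  imports Defs
begin

lemma lookup_smult[simp]: "Poly_Mapping.lookup (pm_smult c f) k = c * Poly_Mapping.lookup f k"
  unfolding pm_smult_def by (simp add: Poly_Mapping.map.rep_eq when_def)

lemma smult_add_right: "pm_smult c (f + g) = pm_smult c f + pm_smult c g"
  by (rule poly_mapping_eqI) (simp add: lookup_add algebra_simps)
lemma smult_add_left: "pm_smult (c + d) f = pm_smult c f + pm_smult d f"
  by (rule poly_mapping_eqI) (simp add: lookup_add algebra_simps)
lemma smult_smult[simp]: "pm_smult c (pm_smult d f) = pm_smult (c * d) f"
  by (rule poly_mapping_eqI) (simp add: algebra_simps)
lemma smult_one[simp]: "pm_smult 1 f = f"
  by (rule poly_mapping_eqI) simp
lemma smult_zero_left[simp]: "pm_smult 0 f = 0"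
  by (rule poly_mapping_eqI) simp
lemma smult_zero_right[simp]: "pm_smult c 0 = 0"
  by (rule poly_mapping_eqI) simp
lemma smult_neg_left: "pm_smult (- c) f = - pm_smult c f"
  by (rule poly_mapping_eqI) simp
lemma smult_neg_right: "pm_smult c (- f) = - pm_smult c f"
  by (rule poly_mapping_eqI) simp
lemma smult_single[simp]: "pm_smult c (Poly_Mapping.single k d) = Poly_Mapping.single k (c * d)"
  by (rule poly_mapping_eqI) (simp add: lookup_single when_def)
lemma smult_sum_right: "pm_smult c (sum f A) = (\<Sum>x\<in>A. pm_smult c (f x))"
  by (rule poly_mapping_eqI) (simp add: lookup_sum sum_distrib_left)
lemma smult_sum_left: "pm_smult (sum f A) g = (\<Sum>x\<in>A. pm_smult (f x) g)"
  by (rule poly_mapping_eqI) (simp add: lookup_sum sum_distrib_right)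

lemma lin_superset:
  assumes "finite S" "Poly_Mapping.keys f \<subseteq> S"
  shows "lin F f = (\<Sum>u\<in>S. pm_smult (Poly_Mapping.lookup f u) (F u))"
  unfolding lin_def
  by (rule sum.mono_neutral_left) (use assms in \<open>auto simp: in_keys_iff\<close>)

lemma lin_add: "lin F (f + g) = lin F f + lin F g"
proof -
  let ?S = "Poly_Mapping.keys f \<union> Poly_Mapping.keys g"
  have "lin F (f + g) = (\<Sum>u\<in>?S. pm_smult (Poly_Mapping.lookup (f+g) u) (F u))"
    by (rule lin_superset) (auto simp: keys_add)
  also have "\<dots> = (\<Sum>u\<in>?S. pm_smult (Poly_Mapping.lookup f u) (F u)) + (\<Sum>u\<in>?S. pm_smult (Poly_Mapping.lookup g u) (F u))"
    by (simp add: lookup_add smult_add_left sum.distrib)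
  also have "\<dots> = lin F f + lin F g"
    by (subst (1 2) lin_superset[where S="?S"]) auto
  finally show ?thesis .
qed

lemma lin_zero[simp]: "lin F 0 = 0"
  by (simp add: lin_def)

lemma lin_smult: "lin F (pm_smult c f) = pm_smult c (lin F f)"
proof -
  have "lin F (pm_smult c f) = (\<Sum>u\<in>Poly_Mapping.keys f. pm_smult (Poly_Mapping.lookup (pm_smult c f) u) (F u))"
    by (rule lin_superset) (auto simp: in_keys_iff)
  then show ?thesis by (simp add: lin_def smult_sum_right)
qed

lemma lin_neg: "lin F (- f) = - lin F f"
  by (metis add_eq_0_iff lin_add lin_zero neg_eq_iff_add_eq_0)

lemma lin_diff: "lin F (f - g) = lin F f - lin F g"
  by (metis diff_conv_add_uminus lin_add lin_neg)

lemma lin_sum: "lin F (sum g A) = (\<Sum>x\<in>A. lin F (g x))"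
  by (induction A rule: infinite_finite_induct) (auto simp: lin_add)

lemma lin_single[simp]: "lin F (Poly_Mapping.single u c) = pm_smult c (F u)"
  by (cases "c = 0") (simp_all add: lin_def)

lemma lin_cong: "(\<And>u. u \<in> Poly_Mapping.keys f \<Longrightarrow> F u = G u) \<Longrightarrow> lin F f = lin G f"
  unfolding lin_def by simp

lemma lin_fun_add: "lin (\<lambda>u. F u + G u) f = lin F f + lin G f"
  unfolding lin_def by (simp add: smult_add_right sum.distrib)
lemma lin_fun_zero[simp]: "lin (\<lambda>u. 0) f = 0"
  unfolding lin_def by simp
lemma lin_fun_smult: "lin (\<lambda>u. pm_smult c (F u)) f = pm_smult c (lin F f)"
  unfolding lin_def by (simp add: smult_sum_right mult.commute)
lemma lin_fun_neg: "lin (\<lambda>u. - F u) f = - lin F f"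
  unfolding lin_def by (simp add: smult_neg_right sum_negf)
lemma lin_fun_diff: "lin (\<lambda>u. F u - G u) f = lin F f - lin G f"
  using lin_fun_add[of F "\<lambda>u. - G u" f] lin_fun_neg[of G f] by simp
lemma lin_fun_sum: "lin (\<lambda>u. \<Sum>x\<in>A. F x u) f = (\<Sum>x\<in>A. lin (F x) f)"
  unfolding lin_def by (simp add: smult_sum_right sum.swap[of _ A])

lemma lin_comp: "lin G (lin F f) = lin (\<lambda>u. lin G (F u)) f"
  by (simp add: lin_def[of F] lin_sum lin_smult) (simp add: lin_def)

lemma lin_id[simp]: "lin (\<lambda>u. Poly_Mapping.single u 1) f = f"
proof (rule poly_mapping_eqI)
  fix k
  have "Poly_Mapping.lookup (lin (\<lambda>u. Poly_Mapping.single u 1) f) k =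
     (\<Sum>u\<in>Poly_Mapping.keys f. Poly_Mapping.lookup f u when u = k)"
    by (simp add: lin_def lookup_sum lookup_single)
  also have "\<dots> = Poly_Mapping.lookup f k"
    by (cases "k \<in> Poly_Mapping.keys f") (auto simp: when_def in_keys_iff)
  finally show "Poly_Mapping.lookup (lin (\<lambda>u. Poly_Mapping.single u 1) f) k = Poly_Mapping.lookup f k" .
qed


lemma bilin_lin: "bilin F f g = lin (\<lambda>u. lin (F u) g) f"
  unfolding bilin_def lin_def by (simp add: smult_sum_right)

lemma lin_swap: "lin (\<lambda>u. lin (\<lambda>v. F u v) g) f = lin (\<lambda>v. lin (\<lambda>u. F u v) f) g"
  unfolding lin_def by (simp add: smult_sum_right sum.swap[of _ "Poly_Mapping.keys f"] mult.commute)

definition slin :: "('b \<Rightarrow> 'k::comm_ring_1) \<Rightarrow> ('b \<Rightarrow>\<^sub>0 'k) \<Rightarrow> 'k" where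
  "slin E f = (\<Sum>u\<in>Poly_Mapping.keys f. Poly_Mapping.lookup f u * E u)"

lemma slin_superset:
  assumes "finite S" "Poly_Mapping.keys f \<subseteq> S"
  shows "slin E f = (\<Sum>u\<in>S. Poly_Mapping.lookup f u * E u)"
  unfolding slin_def
  by (rule sum.mono_neutral_left) (use assms in \<open>auto simp: in_keys_iff\<close>)

lemma slin_add: "slin E (f + g) = slin E f + slin E g"
proof -
  let ?S = "Poly_Mapping.keys f \<union> Poly_Mapping.keys g"
  have "slin E (f + g) = (\<Sum>u\<in>?S. Poly_Mapping.lookup (f+g) u * E u)"
    by (rule slin_superset) (auto simp: keys_add)
  also have "\<dots> = (\<Sum>u\<in>?S. Poly_Mapping.lookup f u * E u) + (\<Sum>u\<in>?S. Poly_Mapping.lookup g u * E u)"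
    by (simp add: lookup_add distrib_right sum.distrib)
  also have "\<dots> = slin E f + slin E g"
    by (subst (1 2) slin_superset[where S="?S"]) auto
  finally show ?thesis .
qed

lemma slin_zero[simp]: "slin E 0 = 0" by (simp add: slin_def)

lemma slin_smult: "slin E (pm_smult c f) = c * slin E f"
proof -
  have "slin E (pm_smult c f) = (\<Sum>u\<in>Poly_Mapping.keys f. Poly_Mapping.lookup (pm_smult c f) u * E u)"
    by (rule slin_superset) (auto simp: in_keys_iff)
  then show ?thesis by (simp add: slin_def sum_distrib_left mult.assoc)
qed

lemma slin_sum: "slin E (sum g A) = (\<Sum>x\<in>A. slin E (g x))"
  by (induction A rule: infinite_finite_induct) (auto simp: slin_add)

lemma slin_single[simp]: "slin E (Poly_Mapping.single u c) = c * E u"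
  by (cases "c = 0") (simp_all add: slin_def)

lemma slin_comp: "slin E (lin F f) = slin (\<lambda>u. slin E (F u)) f"
  by (simp add: lin_def slin_sum slin_smult) (simp add: slin_def)


definition mbind :: "'a multiset \<Rightarrow> ('a \<Rightarrow> 'b multiset) \<Rightarrow> 'b multiset" where
  "mbind M f = sum_mset (image_mset f M)"

lemma mbind_empty[simp]: "mbind {#} f = {#}" by (simp add: mbind_def)
lemma mbind_single[simp]: "mbind {#x#} f = f x" by (simp add: mbind_def)
lemma mbind_add[simp]: "mbind (M + N) f = mbind M f + mbind N f" by (simp add: mbind_def)
lemma mbind_image[simp]: "mbind (image_mset g M) f = mbind M (\<lambda>x. f (g x))"
  by (induction M) (simp_all add: mbind_def)
lemma image_mbind: "mbind M (\<lambda>x. image_mset h (f x)) = image_mset h (mbind M f)"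
  by (induction M) (simp_all add: mbind_def)
lemma mbind_fadd[simp]: "mbind M (\<lambda>x. f x + g x) = mbind M f + mbind M g"
  by (induction M) (simp_all add: mbind_def)
lemma mbind_fempty[simp]: "mbind M (\<lambda>x. {#}) = {#}"
  by (induction M) (simp_all add: mbind_def)
lemma mbind_unit[simp]: "mbind M (\<lambda>x. {#x#}) = M"
  by (induction M) (simp_all add: mbind_def)
lemma mbind_unit'[simp]: "mbind M (\<lambda>x. {#f x#}) = image_mset f M"
  by (induction M) (simp_all add: mbind_def)
lemma mbind_mbind: "mbind (mbind M f) g = mbind M (\<lambda>x. mbind (f x) g)"
  by (induction M) (simp_all add: mbind_def)
lemma mbind_swap: "mbind M (\<lambda>x. mbind N (f x)) = mbind N (\<lambda>y. mbind M (\<lambda>x. f x y))"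
  by (induction M) (simp_all add: mbind_def)

lemma mset_pm_eq: "(mset_pm (M::'a multiset) :: 'a \<Rightarrow>\<^sub>0 'k::comm_ring_1) = sum_mset (image_mset (\<lambda>x. Poly_Mapping.single x 1) M)"
proof (rule poly_mapping_eqI)
  fix k :: 'a
  have l: "Poly_Mapping.lookup (sum_mset (image_mset (\<lambda>x. Poly_Mapping.single x (1::'k)) M)) k = of_nat (count M k)" for M
    by (induction M) (auto simp: lookup_add lookup_single when_def)
  have "Poly_Mapping.lookup (mset_pm M :: 'a \<Rightarrow>\<^sub>0 'k) k = (\<Sum>w\<in>set_mset M. (of_nat (count M w)::'k) when w = k)"
    by (simp add: mset_pm_def lookup_sum lookup_single)
  also have "\<dots> = of_nat (count M k)"
    by (cases "k \<in># M") (auto simp: when_def not_in_iff)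
  finally show "Poly_Mapping.lookup (mset_pm M :: 'a \<Rightarrow>\<^sub>0 'k) k = Poly_Mapping.lookup (sum_mset (image_mset (\<lambda>x. Poly_Mapping.single x (1::'k)) M)) k"
    by (simp add: l)
qed

lemma mset_pm_add[simp]: "mset_pm (M + N) = mset_pm M + mset_pm N"
  by (simp add: mset_pm_eq)
lemma mset_pm_empty[simp]: "mset_pm {#} = 0"
  by (simp add: mset_pm_eq)
lemma mset_pm_single[simp]: "mset_pm {#x#} = Poly_Mapping.single x 1"
  by (simp add: mset_pm_eq)

lemma mset_pm_add_mset[simp]: "mset_pm (add_mset x M) = Poly_Mapping.single x 1 + mset_pm M"
  by (simp add: mset_pm_eq)

lemma lin_mset_pm: "lin F (mset_pm M) = sum_mset (image_mset F M)"
  by (induction M) (simp_all add: lin_add)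
lemma slin_mset_pm: "slin F (mset_pm M) = sum_mset (image_mset F M)"
  by (induction M) (simp_all add: slin_add)
lemma mset_pm_mbind: "mset_pm (mbind M f) = sum_mset (image_mset (\<lambda>x. mset_pm (f x)) M)"
  by (induction M) (simp_all add: mbind_def)

lemma msh_Nil2[simp]: "msh xs [] = {#xs#}"
  by (cases xs) auto

lemma msh_nonempty: "\<gamma> \<in># msh (a # x) y \<Longrightarrow> \<gamma> \<noteq> []"
  by (cases y) auto

lemma msh_nonempty': "\<gamma> \<in># msh x (b # y) \<Longrightarrow> \<gamma> \<noteq> []"
  by (cases x) auto

lemma msh_Nil_fun: "msh [] = (\<lambda>\<gamma>. {#\<gamma>#})"
  by (rule ext) simp

definition P3 where "P3 x y z = mbind (msh x y) (\<lambda>\<gamma>. msh \<gamma> z)"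
definition Q3 where "Q3 x y z = mbind (msh y z) (msh x)"

lemma P3_cons: "P3 (a#x) (b#y) (c#z) =
   image_mset ((#) a) (P3 x (b#y) (c#z)) + image_mset ((#) b) (P3 (a#x) y (c#z)) +
   image_mset ((#) (a+b)) (P3 x y (c#z)) + image_mset ((#) c) (P3 (a#x) (b#y) z) +
   image_mset ((#) (a+c)) (P3 x (b#y) z) + image_mset ((#) (b+c)) (P3 (a#x) y z) +
   image_mset ((#) (a+b+c)) (P3 x y z)"
  unfolding P3_def by (simp add: image_mbind add_ac)

lemma Q3_cons: "Q3 (a#x) (b#y) (c#z) =
   image_mset ((#) a) (Q3 x (b#y) (c#z)) + image_mset ((#) b) (Q3 (a#x) y (c#z)) +
   image_mset ((#) (a+b)) (Q3 x y (c#z)) + image_mset ((#) c) (Q3 (a#x) (b#y) z) +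
   image_mset ((#) (a+c)) (Q3 x (b#y) z) + image_mset ((#) (b+c)) (Q3 (a#x) y z) +
   image_mset ((#) (a+b+c)) (Q3 x y z)"
  unfolding Q3_def by (simp add: image_mbind add_ac)

lemma P3_Q3: "P3 x y z = Q3 x y z"
proof (induction "length x + length y + length z" arbitrary: x y z rule: less_induct)
  case less
  show ?case
  proof (cases "x = [] \<or> y = [] \<or> z = []")
    case True
    then show ?thesis by (auto simp: P3_def Q3_def msh_Nil_fun)
  next
    case False
    then obtain a x' b y' c z' where xyz: "x = a#x'" "y = b#y'" "z = c#z'"
      by (meson list.exhaust)
    show ?thesis unfolding xyz P3_cons Q3_cons
      by (subst (1 2 3 4 5 6 7) less) (auto simp: xyz)
  qed
qed

lemma msh_assoc: "mbind (msh x y) (\<lambda>\<gamma>. msh \<gamma> z) = mbind (msh y z) (msh x)"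
  using P3_Q3 unfolding P3_def Q3_def by simp

lemma msh_Nil_mem: "[] \<in># msh x y \<longleftrightarrow> x = [] \<and> y = []"
  by (cases x; cases y) auto


lemma sum_Suc_shift: "(\<Sum>i\<in>{0..Suc n}. f i) = f 0 + (\<Sum>i\<in>{0..n}. f (Suc i))"
  using sum.atLeast0_atMost_Suc_shift[of f n] by (simp only: o_def)

lemma image_mset_sum: "image_mset h (sum f A) = (\<Sum>x\<in>A. image_mset h (f x))"
  by (induction A rule: infinite_finite_induct) auto

definition splits :: "'a list \<Rightarrow> ('a list \<times> 'a list) multiset" where
  "splits \<gamma> = (\<Sum>i\<in>{0..length \<gamma>}. {#(take i \<gamma>, drop i \<gamma>)#})"

lemma splits_Nil[simp]: "splits [] = {#([],[])#}"
  by (simp add: splits_def)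

lemma splits_Cons: "splits (a#\<gamma>) = {#([], a#\<gamma>)#} + image_mset (apfst ((#) a)) (splits \<gamma>)"
  unfolding splits_def length_Cons sum_Suc_shift by (simp add: image_mset_sum)

definition mprod :: "'a multiset \<Rightarrow> 'b multiset \<Rightarrow> ('a \<times> 'b) multiset" where
  "mprod M N = mbind M (\<lambda>x. image_mset (Pair x) N)"

lemma mprod_single[simp]: "mprod {#u#} N = image_mset (Pair u) N"
  by (simp add: mprod_def)
lemma mprod_add[simp]: "mprod (M1 + M2) N = mprod M1 N + mprod M2 N"
  by (simp add: mprod_def)
lemma mprod_image: "mprod (image_mset h M) N = image_mset (apfst h) (mprod M N)"
  by (simp add: mprod_def image_mbind[symmetric] image_mset.compositionality o_def)

lemma mbind_add_mset[simp]: "mbind M (\<lambda>x. add_mset (f x) (g x)) = image_mset f M + mbind M g"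
  by (induction M) (simp_all add: mbind_def)

definition LL where "LL \<alpha> \<beta> = mbind (msh \<alpha> \<beta>) splits"

definition FF where "FF \<alpha> \<beta> i j = mprod (msh (take i \<alpha>) (take j \<beta>)) (msh (drop i \<alpha>) (drop j \<beta>))"

definition RR where "RR \<alpha> \<beta> = (\<Sum>i\<in>{0..length \<alpha>}. \<Sum>j\<in>{0..length \<beta>}. FF \<alpha> \<beta> i j)"

lemma LL_cons: "LL (a#x) (b#y) = image_mset (Pair []) (msh (a#x) (b#y))
   + image_mset (apfst ((#) a)) (LL x (b#y)) + image_mset (apfst ((#) b)) (LL (a#x) y)
   + image_mset (apfst ((#) (a+b))) (LL x y)"
  unfolding LL_def
  by (simp add: splits_Cons image_mbind image_mset.compositionality o_def add_ac)

lemma FF_00: "FF (a#x) (b#y) 0 0 = image_mset (Pair []) (msh (a#x) (b#y))"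
  by (simp add: FF_def)
lemma FF_0S: "FF (a#x) (b#y) 0 (Suc j) = image_mset (apfst ((#) b)) (FF (a#x) y 0 j)"
  by (simp add: FF_def image_mset.compositionality o_def)
lemma FF_S0: "FF (a#x) (b#y) (Suc i) 0 = image_mset (apfst ((#) a)) (FF x (b#y) i 0)"
  by (simp add: FF_def image_mset.compositionality o_def)
lemma FF_SS: "FF (a#x) (b#y) (Suc i) (Suc j) = image_mset (apfst ((#) a)) (FF x (b#y) i (Suc j))
   + image_mset (apfst ((#) b)) (FF (a#x) y (Suc i) j) + image_mset (apfst ((#) (a+b))) (FF x y i j)"
  by (simp add: FF_def mprod_image)

lemma RR_cons: "RR (a#x) (b#y) = image_mset (Pair []) (msh (a#x) (b#y))
   + image_mset (apfst ((#) a)) (RR x (b#y)) + image_mset (apfst ((#) b)) (RR (a#x) y)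
   + image_mset (apfst ((#) (a+b))) (RR x y)"
proof -
  have A: "RR (a#x) (b#y) = FF (a#x) (b#y) 0 0 + (\<Sum>j\<in>{0..length y}. FF (a#x) (b#y) 0 (Suc j))
     + (\<Sum>i\<in>{0..length x}. FF (a#x) (b#y) (Suc i) 0)
     + (\<Sum>i\<in>{0..length x}. \<Sum>j\<in>{0..length y}. FF (a#x) (b#y) (Suc i) (Suc j))"
    unfolding RR_def length_Cons sum_Suc_shift by (simp add: sum.distrib add_ac)
  have B: "RR x (b#y) = (\<Sum>i\<in>{0..length x}. FF x (b#y) i 0) + (\<Sum>i\<in>{0..length x}. \<Sum>j\<in>{0..length y}. FF x (b#y) i (Suc j))"
    unfolding RR_def length_Cons sum_Suc_shift by (simp add: sum.distrib add_ac)
  have C: "RR (a#x) y = (\<Sum>j\<in>{0..length y}. FF (a#x) y 0 j) + (\<Sum>i\<in>{0..length x}. \<Sum>j\<in>{0..length y}. FF (a#x) y (Suc i) j)"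
    unfolding RR_def length_Cons sum_Suc_shift by (simp add: sum.distrib add_ac)
  show ?thesis
    unfolding A B C FF_00 FF_0S FF_S0 FF_SS
    by (simp add: sum.distrib image_mset_sum RR_def add_ac)
qed

lemma LL_RR: "LL \<alpha> \<beta> = RR \<alpha> \<beta>"
proof (induction "length \<alpha> + length \<beta>" arbitrary: \<alpha> \<beta> rule: less_induct)
  case less
  show ?case
  proof (cases "\<alpha> = [] \<or> \<beta> = []")
    case True
    then show ?thesis
      by (auto simp: LL_def RR_def FF_def splits_def msh_Nil_fun)
  next
    case False
    then obtain a x b y where xy: "\<alpha> = a#x" "\<beta> = b#y"
      by (meson list.exhaust)
    show ?thesis unfolding xy LL_cons RR_cons
      by (subst (1 2 3) less) (auto simp: xy)
  qed
qed


section \<open>compositions\<close>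

lemma length_le_sum_pos: "(\<forall>i\<in>set c. 0 < (i::nat)) \<Longrightarrow> length c \<le> sum_list c"
  by (induction c) auto

lemma finite_compositions: "finite (compositions n)"
proof -
  have "compositions n \<subseteq> {xs. set xs \<subseteq> {0..n} \<and> length xs \<le> n}"
    unfolding compositions_def using length_le_sum_pos member_le_sum_list by fastforce
  moreover have "finite {xs. set xs \<subseteq> {0..n::nat} \<and> length xs \<le> n}"
    by (rule finite_lists_length_le) simp
  ultimately show ?thesis by (rule finite_subset)
qed

lemma compositions_0: "compositions 0 = {[]}"
  unfolding compositions_def
  apply (rule set_eqI)
  apply (case_tac x)
   apply auto
  done

lemma compositions_pos: "0 < n \<Longrightarrow> compositions n = (\<lambda>(j,c). j#c) ` (SIGMA j:{1..n}. compositions (n-j))"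
  unfolding compositions_def
  apply (rule set_eqI)
  apply (case_tac x)
   apply (auto simp: image_iff)
  done

definition T0 :: "nat list \<Rightarrow> (nat list \<Rightarrow>\<^sub>0 'k::comm_ring_1)" where
  "T0 \<beta> = (\<Sum>c\<in>compositions (length \<beta>). Poly_Mapping.single (block_sums c \<beta>) 1)"

definition cons :: "nat \<Rightarrow> (nat list \<Rightarrow>\<^sub>0 'k::comm_ring_1) \<Rightarrow> (nat list \<Rightarrow>\<^sub>0 'k)" where
  "cons s X = lin (\<lambda>\<gamma>. Poly_Mapping.single (s#\<gamma>) 1) X"

definition qs :: "(nat list \<Rightarrow>\<^sub>0 'k::comm_ring_1) \<Rightarrow> (nat list \<Rightarrow>\<^sub>0 'k) \<Rightarrow> (nat list \<Rightarrow>\<^sub>0 'k)" where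
  "qs X Y = bilin (\<lambda>x y. mset_pm (msh x y)) X Y"

lemma T0_Nil[simp]: "T0 [] = Poly_Mapping.single [] 1"
  by (simp add: T0_def compositions_0)

lemma cons_single[simp]: "cons s (Poly_Mapping.single x c) = Poly_Mapping.single (s#x) c"
  by (simp add: cons_def)
lemma cons_add: "cons s (X + Y) = cons s X + cons s Y"
  by (simp add: cons_def lin_add)
lemma cons_sum: "cons s (sum f A) = (\<Sum>a\<in>A. cons s (f a))"
  by (simp add: cons_def lin_sum)
lemma cons_mset: "cons s (mset_pm M) = mset_pm (image_mset ((#) s) M)"
  unfolding cons_def lin_mset_pm by (simp add: mset_pm_eq image_mset.compositionality o_def)

lemma T0_cons_rec:
  assumes "\<beta> \<noteq> []"
  shows "(T0 \<beta> :: nat list \<Rightarrow>\<^sub>0 'k::comm_ring_1) = (\<Sum>j\<in>{1..length \<beta>}. cons (sum_list (take j \<beta>)) (T0 (drop j \<beta>)))"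
proof -
  have inj: "inj_on (\<lambda>(j,c). j#c) (SIGMA j:{1..length \<beta>}. compositions (length \<beta>-j))"
    by (auto simp: inj_on_def)
  have "(T0 \<beta> :: nat list \<Rightarrow>\<^sub>0 'k) = (\<Sum>jc\<in>(SIGMA j:{1..length \<beta>}. compositions (length \<beta>-j)).
        Poly_Mapping.single (block_sums ((\<lambda>(j,c). j#c) jc) \<beta>) 1)"
  proof -
    have "compositions (length \<beta>) = (\<lambda>(j,c). j#c) ` (SIGMA j:{1..length \<beta>}. compositions (length \<beta>-j))"
      using assms by (simp add: compositions_pos)
    then show ?thesis unfolding T0_def by (simp only: sum.reindex[OF inj] o_def)
  qed
  also have "\<dots> = (\<Sum>j\<in>{1..length \<beta>}. \<Sum>c\<in>compositions (length \<beta>-j).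
        Poly_Mapping.single (sum_list (take j \<beta>) # block_sums c (drop j \<beta>)) 1)"
    apply (subst sum.Sigma)
      apply (simp_all add: finite_compositions)
    apply (rule sum.cong)
     apply auto
    done
  also have "\<dots> = (\<Sum>j\<in>{1..length \<beta>}. cons (sum_list (take j \<beta>)) (T0 (drop j \<beta>)))"
    by (simp add: T0_def cons_sum)
  finally show ?thesis .
qed

lemma T0_rev_rec:
  assumes "\<gamma> \<noteq> []"
  shows "(T0 (rev \<gamma>) :: nat list \<Rightarrow>\<^sub>0 'k::comm_ring_1) =
     (\<Sum>m\<in>{0..<length \<gamma>}. cons (sum_list (drop m \<gamma>)) (T0 (rev (take m \<gamma>))))"
proof -
  let ?n = "length \<gamma>"
  have "(T0 (rev \<gamma>) :: nat list \<Rightarrow>\<^sub>0 'k) = (\<Sum>j\<in>{1..?n}. cons (sum_list (take j (rev \<gamma>))) (T0 (drop j (rev \<gamma>))))"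
    using T0_cons_rec[of "rev \<gamma>"] assms by simp
  also have "\<dots> = (\<Sum>j\<in>{1..?n}. cons (sum_list (drop (?n - j) \<gamma>)) (T0 (rev (take (?n - j) \<gamma>))))"
  proof (intro sum.cong refl)
    fix x assume "x \<in> {1..?n}"
    then have "take x (rev \<gamma>) = rev (drop (?n - x) \<gamma>)" "drop x (rev \<gamma>) = rev (take (?n - x) \<gamma>)"
      using rev_drop[of "?n - x" \<gamma>] rev_take[of "?n - x" \<gamma>] by auto
    then show "cons (sum_list (take x (rev \<gamma>))) (T0 (drop x (rev \<gamma>))) =
       (cons (sum_list (drop (?n - x) \<gamma>)) (T0 (rev (take (?n - x) \<gamma>))) :: nat list \<Rightarrow>\<^sub>0 'k)"
      by simp
  qed
  also have "\<dots> = (\<Sum>m\<in>{0..<?n}. cons (sum_list (drop m \<gamma>)) (T0 (rev (take m \<gamma>))))"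
    by (rule sum.reindex_bij_witness[of _ "\<lambda>m. ?n - m" "\<lambda>j. ?n - j"]) auto
  finally show ?thesis .
qed

lemma qs_single: "qs (Poly_Mapping.single x c) (Poly_Mapping.single y d) = pm_smult (c*d) (mset_pm (msh x y))"
  by (simp add: qs_def bilin_lin)

lemma qs_linL: "qs X Y = lin (\<lambda>x. qs (Poly_Mapping.single x 1) Y) X"
  by (simp add: qs_def bilin_lin)
lemma qs_linR: "qs X Y = lin (\<lambda>y. qs X (Poly_Mapping.single y 1)) Y"
  by (simp add: qs_def bilin_lin lin_comp) (rule lin_swap)

lemma qs_addL: "qs (X + X') Y = qs X Y + qs X' Y"
  by (simp add: qs_def bilin_lin lin_add)
lemma qs_sumL: "qs (sum f A) Y = (\<Sum>a\<in>A. qs (f a) Y)"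
  by (simp add: qs_def bilin_lin lin_sum)
lemma qs_smultL: "qs (pm_smult c X) Y = pm_smult c (qs X Y)"
  by (simp add: qs_def bilin_lin lin_smult)
lemma qs_addR: "qs X (Y + Y') = qs X Y + qs X Y'"
  by (simp add: qs_def bilin_lin lin_add lin_fun_add)
lemma qs_sumR: "qs X (sum f A) = (\<Sum>a\<in>A. qs X (f a))"
  by (simp add: qs_def bilin_lin lin_sum lin_fun_sum)
lemma qs_smultR: "qs X (pm_smult c Y) = pm_smult c (qs X Y)"
  by (simp add: qs_def bilin_lin lin_smult lin_fun_smult)

lemma qs_unitL[simp]: "qs (Poly_Mapping.single [] 1) Y = Y"
  by (simp add: qs_def bilin_lin msh_Nil_fun)
lemma qs_unitR[simp]: "qs X (Poly_Mapping.single [] 1) = X"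
  by (simp add: qs_def bilin_lin)

lemma qs_cons_rec:
  "qs (cons s X) (cons t Y) = cons s (qs X (cons t Y)) + cons t (qs (cons s X) Y) + cons (s+t) (qs X Y)"
proof -
  have base: "qs (cons s (Poly_Mapping.single x 1)) (cons t (Poly_Mapping.single y 1)) =
     cons s (qs (Poly_Mapping.single x 1) (cons t (Poly_Mapping.single y 1))) +
     cons t (qs (cons s (Poly_Mapping.single x 1)) (Poly_Mapping.single y 1)) +
     cons (s+t) (qs (Poly_Mapping.single x 1) (Poly_Mapping.single y 1))" for x y
    by (simp add: qs_single cons_mset)
  have lx: "cons s X = lin (\<lambda>x. cons s (Poly_Mapping.single x 1)) X" for s X
    by (simp add: cons_def)
  have cx: "cons s (lin F X) = lin (\<lambda>x. cons s (F x)) X" for s F X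
    by (simp add: cons_def lin_comp)
  have L: "qs (cons s X) Z = lin (\<lambda>x. qs (cons s (Poly_Mapping.single x 1)) Z) X" for Z
    by (subst qs_linL, subst lx, simp add: lin_comp, (subst qs_linL, simp)?)
  have R: "qs Z (cons t Y) = lin (\<lambda>y. qs Z (cons t (Poly_Mapping.single y 1))) Y" for Z
    by (subst qs_linR, subst lx, simp add: lin_comp, (subst qs_linR, simp)?)
  show ?thesis
    apply (simp only: L[of "cons t Y"] L[of Y] qs_linL[of X] cx lin_fun_add[symmetric])
    apply (rule lin_cong)
    apply (simp only: R qs_linR[of _ Y] cx lin_fun_add[symmetric])
    apply (rule lin_cong)
    apply (simp add: qs_single cons_mset)
    done
qed


lemma telescope:
  fixes A :: "nat \<Rightarrow> ('b \<Rightarrow>\<^sub>0 'k::comm_ring_1)"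
  shows "(\<Sum>i\<in>{0..k}. pm_smult ((-1)^i) (A i + A (Suc i))) = A 0 + pm_smult ((-1)^k) (A (Suc k))"
proof (induction k)
  case 0 then show ?case by simp
next
  case (Suc k)
  have "(\<Sum>i\<in>{0..Suc k}. pm_smult ((-1)^i) (A i + A (Suc i))) =
     A 0 + pm_smult ((-1)^k) (A (Suc k)) + pm_smult ((-1)^Suc k) (A (Suc k) + A (Suc (Suc k)))"
    using Suc by simp
  also have "\<dots> = A 0 + pm_smult ((-1)^Suc k) (A (Suc (Suc k)))"
    by (simp add: smult_add_right smult_neg_left)
  finally show ?case .
qed

definition Lsum :: "nat list \<Rightarrow> (nat list \<Rightarrow>\<^sub>0 'k::comm_ring_1)" where
  "Lsum \<alpha> = (\<Sum>i\<in>{0..length \<alpha>}. pm_smult ((-1)^i) (qs (T0 (rev (take i \<alpha>))) (Poly_Mapping.single (drop i \<alpha>) 1)))"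

lemma Lsum_Nil: "Lsum [] = Poly_Mapping.single [] 1"
  by (simp add: Lsum_def)

lemma Lsum_nonempty:
  assumes ne: "\<alpha> \<noteq> []"
  shows "(Lsum \<alpha> :: nat list \<Rightarrow>\<^sub>0 'k::comm_ring_1) = 0"
proof -
  define k where "k = length \<alpha>"
  have kpos: "0 < k" using ne by (simp add: k_def)
  define \<sigma> where "\<sigma> j i = sum_list (take (i-j) (drop j \<alpha>))" for j i
  define B :: "nat \<Rightarrow> nat \<Rightarrow> nat list \<Rightarrow>\<^sub>0 'k" where
    "B j i = qs (T0 (rev (take j \<alpha>))) (Poly_Mapping.single (drop i \<alpha>) 1)" for j i
  define A where "A i = (if 1 \<le> i \<and> i \<le> k then (\<Sum>j\<in>{0..<i}. cons (\<sigma> j i) (B j i)) else 0)" for i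
  have T0rec: "(T0 (rev (take i \<alpha>)) :: nat list \<Rightarrow>\<^sub>0 'k) = (\<Sum>j\<in>{0..<i}. cons (\<sigma> j i) (T0 (rev (take j \<alpha>))))"
    if "1 \<le> i" "i \<le> k" for i
  proof -
    have "take i \<alpha> \<noteq> []" using that ne by (simp add: k_def)
    then have "(T0 (rev (take i \<alpha>)) :: nat list \<Rightarrow>\<^sub>0 'k) = (\<Sum>m\<in>{0..<length (take i \<alpha>)}.
        cons (sum_list (drop m (take i \<alpha>))) (T0 (rev (take m (take i \<alpha>)))))"
      by (rule T0_rev_rec)
    also have "\<dots> = (\<Sum>j\<in>{0..<i}. cons (\<sigma> j i) (T0 (rev (take j \<alpha>))))"
      using that by (intro sum.cong) (auto simp: k_def \<sigma>_def drop_take min_def)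
    finally show ?thesis .
  qed
  have key: "B i i = A i + A (Suc i)" if "i \<le> k" for i
  proof (cases "i = 0")
    case True
    obtain a \<alpha>' where "\<alpha> = a # \<alpha>'" using ne by (meson list.exhaust)
    then show ?thesis using True kpos by (simp add: A_def B_def \<sigma>_def)
  next
    case False
    show ?thesis
    proof (cases "i = k")
      case True
      have "B i i = T0 (rev (take k \<alpha>))" using True by (simp add: B_def k_def)
      also have "\<dots> = A i" using True kpos T0rec[of k]
        by (simp add: A_def B_def k_def Suc_leI)
      finally show ?thesis using True by (simp add: A_def)
    next
      case False
      with \<open>i \<noteq> 0\<close> that have i: "1 \<le> i" "i < k" by auto
      have dr: "Poly_Mapping.single (drop i \<alpha>) (1::'k) = cons (\<alpha> ! i) (Poly_Mapping.single (drop (Suc i) \<alpha>) 1)"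
        using i by (simp add: k_def Cons_nth_drop_Suc)
      have sig: "\<sigma> j i + \<alpha> ! i = \<sigma> j (Suc i)" if "j < i" for j
        using that i by (simp add: \<sigma>_def Suc_diff_le take_Suc_conv_app_nth k_def)
      have sig2: "\<sigma> i (Suc i) = \<alpha> ! i"
        using i by (simp add: \<sigma>_def k_def take_Suc_conv_app_nth)
      have "B i i = qs (\<Sum>j\<in>{0..<i}. cons (\<sigma> j i) (T0 (rev (take j \<alpha>)))) (cons (\<alpha> ! i) (Poly_Mapping.single (drop (Suc i) \<alpha>) 1))"
        using i T0rec[of i] by (simp add: B_def dr)
      also have "\<dots> = (\<Sum>j\<in>{0..<i}. cons (\<sigma> j i) (B j i)) +
          cons (\<alpha> ! i) (qs (\<Sum>j\<in>{0..<i}. cons (\<sigma> j i) (T0 (rev (take j \<alpha>)))) (Poly_Mapping.single (drop (Suc i) \<alpha>) 1)) +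
          (\<Sum>j\<in>{0..<i}. cons (\<sigma> j (Suc i)) (B j (Suc i)))"
        apply (simp only: qs_sumL qs_cons_rec sum.distrib)
        using i by (simp add: cons_sum sig B_def Cons_nth_drop_Suc k_def)
      also have "\<dots> = A i + A (Suc i)"
        using i T0rec[of i] by (simp add: A_def sig2 B_def add_ac)
      finally show ?thesis .
    qed
  qed
  have "Lsum \<alpha> = (\<Sum>i\<in>{0..k}. pm_smult ((-1)^i) (A i + A (Suc i)))"
    unfolding Lsum_def k_def[symmetric] by (intro sum.cong refl) (simp add: key[symmetric] B_def)
  also have "\<dots> = 0" by (simp only: telescope) (simp add: A_def)
  finally show ?thesis .
qed


lemma msh_snoc: "msh (x@[a]) (y@[b]) = image_mset (\<lambda>\<gamma>. \<gamma>@[a]) (msh x (y@[b]))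
   + image_mset (\<lambda>\<gamma>. \<gamma>@[b]) (msh (x@[a]) y) + image_mset (\<lambda>\<gamma>. \<gamma>@[a+b]) (msh x y)"
proof (induction "length x + length y" arbitrary: x y rule: less_induct)
  case less
  show ?case
  proof (cases x)
    case Nil
    show ?thesis
    proof (cases y)
      case Nil
      then show ?thesis using \<open>x = []\<close> by (simp add: add_ac)
    next
      case (Cons d y')
      show ?thesis using less[of "[]" y'] \<open>x = []\<close> Cons
        by (simp add: image_mset.compositionality o_def add_ac)
    qed
  next
    case (Cons c x')
    show ?thesis
    proof (cases y)
      case Nil
      show ?thesis using less[of x' "[]"] Cons Nil
        by (simp add: image_mset.compositionality o_def add_ac)
    next
      case Cons2: (Cons d y')
      show ?thesis using less[of x' y] less[of x y'] less[of x' y'] Cons Cons2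
        by (simp add: image_mset.compositionality o_def add_ac)
    qed
  qed
qed

lemma msh_rev: "msh (rev x) (rev y) = image_mset rev (msh x y)"
proof (induction x y rule: msh.induct)
  case (1 ys) then show ?case by simp
next
  case (2 v va) then show ?case by simp
next
  case (3 a as b bs)
  then show ?case
    by (simp add: msh_snoc image_mset.compositionality o_def)
qed

lemma msh_comm: "msh x y = msh y x"
proof (induction x y rule: msh.induct)
  case (1 ys) then show ?case by (cases ys) auto
next
  case (2 v va) then show ?case by simp
next
  case (3 a as b bs)
  then show ?case by (simp add: add_ac)
qed

lemma bs_append: "block_sums (c@d) \<gamma> = block_sums c \<gamma> @ block_sums d (drop (sum_list c) \<gamma>)"
  by (induction c arbitrary: \<gamma>) (auto simp: add.commute)

lemma bs_take: "sum_list c \<le> n \<Longrightarrow> block_sums c (take n \<gamma>) = block_sums c \<gamma>"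
  by (induction c arbitrary: \<gamma> n) (auto simp: min_def drop_take)

lemma bs_rev: "sum_list c = length \<beta> \<Longrightarrow> rev (block_sums c \<beta>) = block_sums (rev c) (rev \<beta>)"
proof (induction c arbitrary: \<beta>)
  case Nil then show ?case by simp
next
  case (Cons i c)
  have il: "i \<le> length \<beta>" using Cons.prems by simp
  have "rev (block_sums (i#c) \<beta>) = block_sums (rev c) (rev (drop i \<beta>)) @ [sum_list (take i \<beta>)]"
    using Cons by simp
  also have "block_sums (rev c) (rev (drop i \<beta>)) = block_sums (rev c) (rev \<beta>)"
    using Cons.prems bs_take[of "rev c" "length \<beta> - i" "rev \<beta>"] by (simp add: rev_drop)
  also have "[sum_list (take i \<beta>)] = block_sums [i] (drop (sum_list (rev c)) (rev \<beta>))"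
  proof -
    have sc: "sum_list c = length \<beta> - i" using Cons.prems by simp
    have "drop (sum_list c) (rev \<beta>) = rev (take i \<beta>)"
      using sc rev_take[of i \<beta>] by simp
    then show ?thesis using il by simp
  qed
  finally show ?case by (simp add: bs_append)
qed

definition Rev :: "(nat list \<Rightarrow>\<^sub>0 'k::comm_ring_1) \<Rightarrow> (nat list \<Rightarrow>\<^sub>0 'k)" where
  "Rev X = lin (\<lambda>\<gamma>. Poly_Mapping.single (rev \<gamma>) 1) X"

lemma Rev_single[simp]: "Rev (Poly_Mapping.single \<gamma> c) = Poly_Mapping.single (rev \<gamma>) c"
  by (simp add: Rev_def)
lemma Rev_Rev[simp]: "Rev (Rev X) = X"
  by (simp add: Rev_def lin_comp)
lemma Rev_sum: "Rev (sum f A) = (\<Sum>a\<in>A. Rev (f a))"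
  by (simp add: Rev_def lin_sum)
lemma Rev_smult: "Rev (pm_smult c X) = pm_smult c (Rev X)"
  by (simp add: Rev_def lin_smult)

lemma compositions_rev: "rev ` compositions n = compositions n"
proof
  have h: "\<And>x. x \<in> compositions n \<Longrightarrow> rev x \<in> compositions n" by (simp add: compositions_def)
  then show "rev ` compositions n \<subseteq> compositions n" by auto
  show "compositions n \<subseteq> rev ` compositions n"
  proof
    fix x assume "x \<in> compositions n"
    then show "x \<in> rev ` compositions n" using h[of x] by (intro image_eqI[of _ rev "rev x"]) auto
  qed
qed

lemma Rev_T0: "Rev (T0 \<beta>) = T0 (rev \<beta>)"
proof -
  have "Rev (T0 \<beta>) = (\<Sum>c\<in>compositions (length \<beta>). Poly_Mapping.single (block_sums (rev c) (rev \<beta>)) 1)"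
    unfolding T0_def Rev_sum by (intro sum.cong refl) (simp add: bs_rev compositions_def)
  also have "\<dots> = (\<Sum>c\<in>rev ` compositions (length \<beta>). Poly_Mapping.single (block_sums c (rev \<beta>)) 1)"
    by (subst sum.reindex) (auto simp: o_def)
  also have "\<dots> = T0 (rev \<beta>)"
    by (simp add: compositions_rev T0_def)
  finally show ?thesis .
qed

lemma Rev_mset: "Rev (mset_pm M) = mset_pm (image_mset rev M)"
  unfolding Rev_def lin_mset_pm by (simp add: mset_pm_eq image_mset.compositionality o_def)

lemma Rev_qs: "Rev (qs X Y) = qs (Rev X) (Rev Y)"
proof -
  have "Rev (qs X Y) = lin (\<lambda>x. lin (\<lambda>y. Rev (mset_pm (msh x y))) Y) X"
    by (simp add: qs_def bilin_lin Rev_def lin_comp)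
  also have "\<dots> = lin (\<lambda>x. lin (\<lambda>y. mset_pm (msh (rev x) (rev y))) Y) X"
    by (simp add: Rev_mset msh_rev)
  also have "\<dots> = qs (Rev X) (Rev Y)"
    by (simp add: qs_def bilin_lin Rev_def lin_comp)
  finally show ?thesis .
qed

lemma qs_comm: "qs X Y = qs Y X"
  unfolding qs_def bilin_lin by (subst lin_swap) (simp add: msh_comm)

definition Rsum :: "nat list \<Rightarrow> (nat list \<Rightarrow>\<^sub>0 'k::comm_ring_1)" where
  "Rsum \<alpha> = (\<Sum>i\<in>{0..length \<alpha>}. pm_smult ((-1)^(length \<alpha> - i)) (qs (Poly_Mapping.single (take i \<alpha>) 1) (T0 (rev (drop i \<alpha>)))))"

lemma Rev_Rsum: "Rev (Rsum \<alpha>) = Lsum (rev \<alpha>)"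
proof -
  let ?k = "length \<alpha>"
  have r1: "rev (take i \<alpha>) = drop (?k - i) (rev \<alpha>)" for i by (simp add: rev_take)
  have r2: "drop i \<alpha> = rev (take (?k - i) (rev \<alpha>))" for i by (metis rev_drop rev_rev_ident)
  have "Rev (Rsum \<alpha>) = (\<Sum>i\<in>{0..?k}. pm_smult ((-1)^(?k - i)) (qs (T0 (rev (take (?k - i) (rev \<alpha>)))) (Poly_Mapping.single (drop (?k - i) (rev \<alpha>)) 1)))"
    unfolding Rsum_def Rev_sum Rev_smult Rev_qs
    apply (intro sum.cong refl)
    subgoal for i
      using r1[of i] r2[of i] by (simp add: Rev_T0 qs_comm)
    done
  also have "\<dots> = Lsum (rev \<alpha>)"
    unfolding Lsum_def
    by (rule sum.reindex_bij_witness[of _ "\<lambda>j. ?k - j" "\<lambda>i. ?k - i"]) auto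
  finally show ?thesis .
qed

lemma Rsum_eq: "(Rsum \<alpha> :: nat list \<Rightarrow>\<^sub>0 'k::comm_ring_1) = (if \<alpha> = [] then Poly_Mapping.single [] 1 else 0)"
proof -
  have "(Rsum \<alpha> :: nat list \<Rightarrow>\<^sub>0 'k) = Rev (Rev (Rsum \<alpha>))" by simp
  also have "\<dots> = Rev (Lsum (rev \<alpha>))" by (simp add: Rev_Rsum)
  also have "\<dots> = (if \<alpha> = [] then Poly_Mapping.single [] 1 else 0)"
    by (simp add: Lsum_Nil Lsum_nonempty Rev_def)
  finally show ?thesis .
qed


definition Emb :: "nat \<Rightarrow> (nat list \<Rightarrow>\<^sub>0 'k::comm_ring_1) \<Rightarrow> (sha_word \<Rightarrow>\<^sub>0 'k)" where
  "Emb a X = lin (\<lambda>\<gamma>. Poly_Mapping.single (a, \<gamma>) 1) X"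

lemma Emb_single[simp]: "Emb a (Poly_Mapping.single \<gamma> c) = Poly_Mapping.single (a, \<gamma>) c"
  by (simp add: Emb_def)
lemma Emb_add: "Emb a (X + Y) = Emb a X + Emb a Y" by (simp add: Emb_def lin_add)
lemma Emb_sum: "Emb a (sum f A) = (\<Sum>x\<in>A. Emb a (f x))" by (simp add: Emb_def lin_sum)
lemma Emb_smult: "Emb a (pm_smult c X) = pm_smult c (Emb a X)" by (simp add: Emb_def lin_smult)
lemma Emb_zero[simp]: "Emb a 0 = 0" by (simp add: Emb_def)
lemma Emb_lin: "Emb a (lin F X) = lin (\<lambda>x. Emb a (F x)) X" by (simp add: Emb_def lin_comp)
lemma Emb_mset: "Emb a (mset_pm N) = mset_pm (image_mset (Pair a) N)"
  unfolding Emb_def lin_mset_pm by (simp add: mset_pm_eq image_mset.compositionality o_def)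

lemma M_eq: "sha_mult_basis (a, x) (b, y) = Emb (a+b) (mset_pm (msh x y))"
  by (simp add: sha_mult_basis_def Emb_mset)

lemma M_eq': "sha_mult_basis (a, x) (b, y) = mset_pm (image_mset (Pair (a+b)) (msh x y))"
  by (simp add: sha_mult_basis_def)

lemma lin_mset_mbind: "lin (\<lambda>\<gamma>. mset_pm (G \<gamma>)) (mset_pm N) = mset_pm (mbind N G)"
  by (simp add: lin_mset_pm mset_pm_mbind)

subsection \<open>associativity\<close>

lemma bilin_assoc_basis:
  assumes "\<And>u v t. lin (\<lambda>w. M w t) (M u v) = lin (M u) (M v t)"
  shows "bilin M (bilin M f g) h = bilin M f (bilin M g h)"
proof -
  have "bilin M (bilin M f g) h = lin (\<lambda>u. lin (\<lambda>v. lin (\<lambda>t. lin (\<lambda>w. M w t) (M u v)) h) g) f"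
    by (simp add: bilin_lin lin_comp) (subst lin_swap, rule refl)
  also have "\<dots> = lin (\<lambda>u. lin (\<lambda>v. lin (\<lambda>t. lin (M u) (M v t)) h) g) f"
    by (simp add: assms)
  also have "\<dots> = bilin M f (bilin M g h)"
    by (simp add: bilin_lin lin_comp)
  finally show ?thesis .
qed

lemma sha_assoc_basis:
  "lin (\<lambda>w. sha_mult_basis w t) (sha_mult_basis u v) = (lin (sha_mult_basis u) (sha_mult_basis v t) :: sha_word \<Rightarrow>\<^sub>0 'k::comm_ring_1)"
proof -
  obtain a x where u: "u = (a, x)" by force
  obtain b y where v: "v = (b, y)" by force
  obtain c z where t: "t = (c, z)" by force
  have "lin (\<lambda>w. sha_mult_basis w t) (sha_mult_basis u v) =
     (sum_mset (image_mset (\<lambda>\<gamma>. mset_pm (image_mset (Pair (a+b+c)) (msh \<gamma> z))) (msh x y)) :: sha_word \<Rightarrow>\<^sub>0 'k)"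
    unfolding u v t M_eq' by (simp add: lin_mset_pm M_eq' image_mset.compositionality o_def)
  also have "\<dots> = mset_pm (image_mset (Pair (a+b+c)) (mbind (msh x y) (\<lambda>\<gamma>. msh \<gamma> z)))"
    by (simp add: mset_pm_mbind[symmetric] image_mbind)
  also have "\<dots> = mset_pm (image_mset (Pair (a+(b+c))) (mbind (msh y z) (msh x)))"
    by (simp add: msh_assoc add.assoc)
  also have "\<dots> = (sum_mset (image_mset (\<lambda>\<gamma>. mset_pm (image_mset (Pair (a+(b+c))) (msh x \<gamma>))) (msh y z)) :: sha_word \<Rightarrow>\<^sub>0 'k)"
    by (simp add: mset_pm_mbind[symmetric] image_mbind)
  also have "\<dots> = lin (sha_mult_basis u) (sha_mult_basis v t)"
    unfolding u v t M_eq' by (simp add: lin_mset_pm M_eq' image_mset.compositionality o_def)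
  finally show ?thesis .
qed


lemma tens_lin: "tens X Y = lin (\<lambda>u. lin (\<lambda>v. Poly_Mapping.single (u,v) 1) Y) X"
  by (simp add: tens_def bilin_lin)
lemma tens_single_right: "tens X (Poly_Mapping.single v c) = lin (\<lambda>u. Poly_Mapping.single (u,v) c) X"
  by (simp add: tens_lin)
lemma tens_single_left: "tens (Poly_Mapping.single u c) Y = lin (\<lambda>v. Poly_Mapping.single (u,v) c) Y"
  by (simp add: tens_lin lin_fun_smult[symmetric])
lemma tmap_single: "tmap F G (Poly_Mapping.single (u,v) c) = pm_smult c (tens (F u) (G v))"
  by (simp add: tmap_def)
lemma assoc_iso_single: "assoc_iso (Poly_Mapping.single ((u,v),w) c) = Poly_Mapping.single (u,(v,w)) c"
  by (simp add: assoc_iso_def)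

lemma D_eq: "sha_coprod_basis (a, \<alpha>) = (\<Sum>i\<in>{0..length \<alpha>}. \<Sum>p\<in>{0..a}.
        Poly_Mapping.single ((p, take i \<alpha>), (a - p, drop i \<alpha>)) (of_nat (a choose p)))"
  by (simp add: sha_coprod_basis_def)

lemma tri: "(\<Sum>i\<in>{0..n::nat}. \<Sum>j\<in>{0..i}. g i j) = (\<Sum>j\<in>{0..n}. \<Sum>i\<in>{0..n-j}. g (j+i) j)"
proof -
  have "(\<Sum>i\<in>{0..n::nat}. \<Sum>j\<in>{0..i}. g i j) = (\<Sum>(i,j)\<in>(SIGMA i:{0..n}. {0..i}). g i j)"
    by (rule sum.Sigma) auto
  also have "\<dots> = (\<Sum>(j,i)\<in>(SIGMA j:{0..n}. {0..n-j}). g (j+i) j)"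
    by (rule sum.reindex_bij_witness[of _ "\<lambda>(j,i). (j+i, j)" "\<lambda>(i,j). (j, i-j)"]) auto
  also have "\<dots> = (\<Sum>j\<in>{0..n}. \<Sum>i\<in>{0..n-j}. g (j+i) j)"
    by (rule sum.Sigma[symmetric]) auto
  finally show ?thesis .
qed

lemma coassoc_basis:
  "assoc_iso (tmap sha_coprod_basis (\<lambda>w. Poly_Mapping.single w 1) (sha_coprod_basis w)) =
   (tmap (\<lambda>w. Poly_Mapping.single w 1) sha_coprod_basis (sha_coprod_basis w) :: _ \<Rightarrow>\<^sub>0 'k::comm_ring_1)"
proof -
  obtain a \<alpha> where w: "w = (a, \<alpha>)" by force
  let ?k = "length \<alpha>"
  define T where "T i p j q = (Poly_Mapping.single ((q, take j \<alpha>), ((p - q, take (i - j) (drop j \<alpha>)), (a - p, drop i \<alpha>)))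
      (of_nat ((a choose p) * (p choose q))) :: _ \<Rightarrow>\<^sub>0 'k)" for i p j q
  have "assoc_iso (tmap sha_coprod_basis (\<lambda>w. Poly_Mapping.single w 1) (sha_coprod_basis w)) =
    (\<Sum>i\<in>{0..?k}. \<Sum>p\<in>{0..a}. \<Sum>j\<in>{0..i}. \<Sum>q\<in>{0..p}. T i p j q)"
    unfolding w D_eq
    apply (simp add: tmap_def lin_sum tens_single_right smult_sum_right assoc_iso_def D_eq T_def)
    apply (intro sum.cong refl)
    apply (auto simp: min_def drop_take)
    done
  also have "\<dots> = (\<Sum>i\<in>{0..?k}. \<Sum>j\<in>{0..i}. \<Sum>p\<in>{0..a}. \<Sum>q\<in>{0..p}. T i p j q)"
    by (rule sum.cong[OF refl], rule sum.swap)
  also have "\<dots> = (\<Sum>j\<in>{0..?k}. \<Sum>i\<in>{0..?k-j}. \<Sum>p\<in>{0..a}. \<Sum>q\<in>{0..p}. T (j+i) p j q)"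
    by (rule tri)
  also have "\<dots> = (\<Sum>j\<in>{0..?k}. \<Sum>i\<in>{0..?k-j}. \<Sum>q\<in>{0..a}. \<Sum>r\<in>{0..a-q}. T (j+i) (q+r) j q)"
    by (rule sum.cong[OF refl], rule sum.cong[OF refl], rule tri)
  also have "\<dots> = (\<Sum>j\<in>{0..?k}. \<Sum>q\<in>{0..a}. \<Sum>i\<in>{0..?k-j}. \<Sum>r\<in>{0..a-q}. T (j+i) (q+r) j q)"
    by (rule sum.cong[OF refl], rule sum.swap)
  also have "\<dots> = (\<Sum>j\<in>{0..?k}. \<Sum>q\<in>{0..a}. \<Sum>i\<in>{0..?k-j}. \<Sum>r\<in>{0..a-q}.
      Poly_Mapping.single ((q, take j \<alpha>), ((r, take i (drop j \<alpha>)), (a - q - r, drop i (drop j \<alpha>))))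
      (of_nat ((a choose q) * ((a - q) choose r))))"
  proof (intro sum.cong refl)
    fix j q i r assume "j \<in> {0..?k}" "q \<in> {0..a}" "i \<in> {0..?k-j}" "r \<in> {0..a-q}"
    then have "q + r \<le> a" by auto
    then have "(a choose (q+r)) * ((q+r) choose q) = (a choose q) * ((a - q) choose r)"
      using choose_mult[of q "q+r" a] by simp
    then show "T (j+i) (q+r) j q = Poly_Mapping.single ((q, take j \<alpha>), ((r, take i (drop j \<alpha>)), (a - q - r, drop i (drop j \<alpha>))))
      (of_nat ((a choose q) * ((a - q) choose r)))"
      by (simp add: T_def add.commute)
  qed
  also have "\<dots> = tmap (\<lambda>w. Poly_Mapping.single w 1) sha_coprod_basis (sha_coprod_basis w)"
    unfolding w D_eq
    by (simp add: tmap_def lin_sum tens_single_left smult_sum_right D_eq)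
  finally show ?thesis .
qed


lemma counit_basis1:
  "lin (\<lambda>(v, w). pm_smult (sha_counit_basis v) (Poly_Mapping.single w 1)) (sha_coprod_basis u) =
   (Poly_Mapping.single u 1 :: _ \<Rightarrow>\<^sub>0 'k::comm_ring_1)"
proof -
  obtain a \<alpha> where u: "u = (a, \<alpha>)" by force
  have "lin (\<lambda>(v, w). pm_smult (sha_counit_basis v) (Poly_Mapping.single w 1)) (sha_coprod_basis u) =
     (\<Sum>i\<in>{0..length \<alpha>}. \<Sum>p\<in>{0..a}. if i = 0 then if p = 0 then Poly_Mapping.single (a, \<alpha>) 1 else 0 else (0::_ \<Rightarrow>\<^sub>0 'k))"
    unfolding u D_eq
    by (auto simp: lin_sum sha_counit_basis_def intro!: sum.cong)
  also have "\<dots> = (\<Sum>i\<in>{0..length \<alpha>}. if i = 0 then (\<Sum>p\<in>{0..a}. if p = 0 then Poly_Mapping.single (a, \<alpha>) 1 else 0) else 0)"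
    by (rule sum.cong) auto
  also have "\<dots> = Poly_Mapping.single u 1" by (simp add: u)
  finally show ?thesis .
qed

lemma counit_basis2:
  "lin (\<lambda>(v, w). pm_smult (sha_counit_basis w) (Poly_Mapping.single v 1)) (sha_coprod_basis u) =
   (Poly_Mapping.single u 1 :: _ \<Rightarrow>\<^sub>0 'k::comm_ring_1)"
proof -
  obtain a \<alpha> where u: "u = (a, \<alpha>)" by force
  have "lin (\<lambda>(v, w). pm_smult (sha_counit_basis w) (Poly_Mapping.single v 1)) (sha_coprod_basis u) =
     (\<Sum>i\<in>{0..length \<alpha>}. \<Sum>p\<in>{0..a}. if i = length \<alpha> then if p = a then Poly_Mapping.single (a, \<alpha>) 1 else 0 else (0::_ \<Rightarrow>\<^sub>0 'k))"
    unfolding u D_eq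
    by (auto simp: lin_sum sha_counit_basis_def intro!: sum.cong)
  also have "\<dots> = (\<Sum>i\<in>{0..length \<alpha>}. if i = length \<alpha> then (\<Sum>p\<in>{0..a}. if p = a then Poly_Mapping.single (a, \<alpha>) 1 else 0) else 0)"
    by (rule sum.cong) auto
  also have "\<dots> = Poly_Mapping.single u 1" by (simp add: u)
  finally show ?thesis .
qed


lemma vand_G:
  fixes G :: "nat \<Rightarrow> ('b \<Rightarrow>\<^sub>0 'k::comm_ring_1)"
  shows "(\<Sum>p\<in>{0..a}. \<Sum>q\<in>{0..b}. pm_smult (of_nat ((a choose p) * (b choose q))) (G (p+q))) =
         (\<Sum>s\<in>{0..a+b}. pm_smult (of_nat ((a+b) choose s)) (G s))"
proof -
  let ?g = "\<lambda>p q. pm_smult (of_nat ((a choose p) * (b choose q))) (G (p+q))"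
  have "(\<Sum>s\<in>{0..a+b}. pm_smult (of_nat ((a+b) choose s)) (G s)) =
        (\<Sum>s\<le>a+b. \<Sum>p\<le>s. ?g p (s - p))"
    by (simp add: atLeast0AtMost vandermonde[symmetric] of_nat_sum smult_sum_left)
  also have "\<dots> = (\<Sum>(p,q)\<in>{(i,j). i+j \<le> a+b}. ?g p q)"
    by (rule sum.triangle_reindex_eq[symmetric])
  also have "\<dots> = (\<Sum>(p,q)\<in>{0..a}\<times>{0..b}. ?g p q)"
  proof (rule sum.mono_neutral_right)
    show "finite {(i, j). i + j \<le> a + b}"
      by (rule finite_subset[of _ "{0..a+b}\<times>{0..a+b}"]) auto
    show "{0..a} \<times> {0..b} \<subseteq> {(i, j). i + j \<le> a + b}" by auto
    show "\<forall>i\<in>{(i, j). i + j \<le> a + b} - {0..a} \<times> {0..b}. (case i of (p, q) \<Rightarrow> ?g p q) = 0"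
    proof
      fix pq assume "pq \<in> {(i, j). i + j \<le> a + b} - {0..a} \<times> {0..b}"
      then obtain p q where pq: "pq = (p,q)" "a < p \<or> b < q" by (cases pq) (auto simp: not_le)
      then show "(case pq of (p, q) \<Rightarrow> ?g p q) = 0" by (auto simp: binomial_eq_0)
    qed
  qed
  also have "\<dots> = (\<Sum>p\<in>{0..a}. \<Sum>q\<in>{0..b}. ?g p q)"
    by (simp add: sum.cartesian_product)
  finally show ?thesis by simp
qed

lemma swap4: "(\<Sum>p\<in>A. \<Sum>q\<in>B. \<Sum>i\<in>C. \<Sum>j\<in>D. f p q i j) = (\<Sum>j\<in>D. \<Sum>q\<in>B. \<Sum>i\<in>C. \<Sum>p\<in>A. f p q i j)"
proof -
  have "(\<Sum>p\<in>A. \<Sum>q\<in>B. \<Sum>i\<in>C. \<Sum>j\<in>D. f p q i j) = (\<Sum>p\<in>A. \<Sum>q\<in>B. \<Sum>j\<in>D. \<Sum>i\<in>C. f p q i j)"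
    by (rule sum.cong[OF refl], rule sum.cong[OF refl], rule sum.swap)
  also have "\<dots> = (\<Sum>p\<in>A. \<Sum>j\<in>D. \<Sum>q\<in>B. \<Sum>i\<in>C. f p q i j)"
    by (rule sum.cong[OF refl], rule sum.swap)
  also have "\<dots> = (\<Sum>j\<in>D. \<Sum>p\<in>A. \<Sum>q\<in>B. \<Sum>i\<in>C. f p q i j)"
    by (rule sum.swap)
  also have "\<dots> = (\<Sum>j\<in>D. \<Sum>q\<in>B. \<Sum>p\<in>A. \<Sum>i\<in>C. f p q i j)"
    by (rule sum.cong[OF refl], rule sum.swap)
  also have "\<dots> = (\<Sum>j\<in>D. \<Sum>q\<in>B. \<Sum>i\<in>C. \<Sum>p\<in>A. f p q i j)"
    by (rule sum.cong[OF refl], rule sum.cong[OF refl], rule sum.swap)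
  finally show ?thesis .
qed

lemma mset_pm_sum: "mset_pm (sum f A) = (\<Sum>x\<in>A. mset_pm (f x))"
  by (induction A rule: infinite_finite_induct) auto

lemma sum_mset_image_sum: "sum_mset (image_mset (\<lambda>\<gamma>. \<Sum>t\<in>A. f t \<gamma>) N) = (\<Sum>t\<in>A. sum_mset (image_mset (f t) N))"
  by (induction N) (auto simp: sum.distrib)

lemma sum_mset_image_smult: "sum_mset (image_mset (\<lambda>\<gamma>. pm_smult c (g \<gamma>)) N) = pm_smult c (sum_mset (image_mset g N))"
  by (induction N) (auto simp: smult_add_right)

lemma D_splits: "(sha_coprod_basis (s, \<gamma>) :: _ \<Rightarrow>\<^sub>0 'k::comm_ring_1) =
  (\<Sum>t\<in>{0..s}. pm_smult (of_nat (s choose t)) (mset_pm (image_mset (\<lambda>(g1,g2). ((t,g1),(s-t,g2))) (splits \<gamma>))))"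
  unfolding D_eq splits_def
  by (subst sum.swap) (simp add: image_mset_sum mset_pm_sum smult_sum_right)

lemma tens_mset: "tens (mset_pm M1) (mset_pm M2) = mset_pm (mprod M1 M2)"
  unfolding tens_lin lin_mset_pm mprod_def mset_pm_mbind by (simp add: mset_pm_eq image_mset.compositionality o_def)

lemma mprod_image2: "mprod (image_mset f M1) (image_mset g M2) = image_mset (map_prod f g) (mprod M1 M2)"
  by (simp add: mprod_def image_mbind[symmetric] image_mset.compositionality o_def)

lemma compat_basis:
  "lin sha_coprod_basis (sha_mult_basis u v) =
   (bilin (tens_mult_basis sha_mult_basis) (sha_coprod_basis u) (sha_coprod_basis v) :: _ \<Rightarrow>\<^sub>0 'k::comm_ring_1)"
proof -
  obtain a x where u: "u = (a, x)" by force
  obtain b y where v: "v = (b, y)" by force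
  define h where "h s = (\<lambda>(g1::nat list, g2::nat list). ((s::nat, g1), (a + b - s, g2)))" for s
  define G :: "nat \<Rightarrow> _ \<Rightarrow>\<^sub>0 'k" where "G s = mset_pm (image_mset (h s) (RR x y))" for s
  have "lin sha_coprod_basis (sha_mult_basis u v) =
      (sum_mset (image_mset (\<lambda>\<gamma>. sha_coprod_basis (a+b, \<gamma>)) (msh x y)) :: _ \<Rightarrow>\<^sub>0 'k)"
    unfolding u v M_eq' by (simp add: lin_mset_pm image_mset.compositionality o_def)
  also have "\<dots> = (\<Sum>t\<in>{0..a+b}. pm_smult (of_nat ((a+b) choose t)) (mset_pm (image_mset (h t) (mbind (msh x y) splits))))"
    by (simp add: D_splits sum_mset_image_sum sum_mset_image_smult mset_pm_mbind[symmetric] image_mbind h_def)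
  also have "\<dots> = (\<Sum>t\<in>{0..a+b}. pm_smult (of_nat ((a+b) choose t)) (G t))"
    by (simp add: G_def LL_RR[unfolded LL_def])
  also have "\<dots> = (\<Sum>p\<in>{0..a}. \<Sum>q\<in>{0..b}. pm_smult (of_nat ((a choose p) * (b choose q))) (G (p+q)))"
    by (rule vand_G[symmetric])
  also have "\<dots> = (\<Sum>p\<in>{0..a}. \<Sum>q\<in>{0..b}. \<Sum>i\<in>{0..length x}. \<Sum>j\<in>{0..length y}.
       pm_smult (of_nat ((a choose p) * (b choose q)))
         (mset_pm (image_mset (map_prod (Pair (p+q)) (Pair (a - p + (b - q)))) (FF x y i j))))"
    apply (intro sum.cong refl)
    apply (simp add: G_def RR_def image_mset_sum mset_pm_sum smult_sum_right)
    apply (intro sum.cong refl arg_cong[where f="\<lambda>z. pm_smult _ (mset_pm z)"] image_mset_cong)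
    apply (auto simp: h_def)
    done
  also have "\<dots> = (\<Sum>j\<in>{0..length y}. \<Sum>q\<in>{0..b}. \<Sum>i\<in>{0..length x}. \<Sum>p\<in>{0..a}.
       pm_smult (of_nat ((a choose p) * (b choose q)))
         (mset_pm (image_mset (map_prod (Pair (p+q)) (Pair (a - p + (b - q)))) (FF x y i j))))"
    by (rule swap4)
  also have "\<dots> = bilin (tens_mult_basis sha_mult_basis) (sha_coprod_basis u) (sha_coprod_basis v)"
    unfolding u v D_eq
    by (simp add: bilin_lin lin_sum smult_sum_right tens_mult_basis_def M_eq' tens_mset mprod_image2 lin_fun_sum FF_def)
  finally show ?thesis .
qed


lemma S_eq: "(sha_antipode_basis (p, \<beta>) :: _ \<Rightarrow>\<^sub>0 'k::comm_ring_1) =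
   pm_smult ((-1)^(p + length \<beta>)) (Emb p (T0 (rev \<beta>)))"
  by (simp add: sha_antipode_basis_def T0_def Emb_sum)

lemma bilin_smultL: "bilin M (pm_smult c X) Y = pm_smult c (bilin M X Y)"
  by (simp add: bilin_lin lin_smult)
lemma bilin_smultR: "bilin M X (pm_smult c Y) = pm_smult c (bilin M X Y)"
  by (simp add: bilin_lin lin_smult lin_fun_smult)

lemma mult_Emb: "bilin sha_mult_basis (Emb p X) (Emb q Y) = Emb (p+q) (qs X Y)"
proof -
  have "bilin sha_mult_basis (Emb p X) (Emb q Y) = lin (\<lambda>x. lin (\<lambda>y. sha_mult_basis (p,x) (q,y)) Y) X"
    by (simp add: bilin_lin Emb_def lin_comp)
  also have "\<dots> = lin (\<lambda>x. lin (\<lambda>y. Emb (p+q) (mset_pm (msh x y))) Y) X"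
    by (simp add: M_eq)
  also have "\<dots> = Emb (p+q) (qs X Y)"
    by (simp add: qs_def bilin_lin Emb_lin)
  finally show ?thesis .
qed

lemma mult_Emb_sR: "bilin sha_mult_basis (Emb p X) (Poly_Mapping.single (q,y) c) = Emb (p+q) (qs X (Poly_Mapping.single y c))"
  using mult_Emb[of p X q "Poly_Mapping.single y c"] by simp
lemma mult_Emb_sL: "bilin sha_mult_basis (Poly_Mapping.single (p,x) c) (Emb q Y) = Emb (p+q) (qs (Poly_Mapping.single x c) Y)"
  using mult_Emb[of p "Poly_Mapping.single x c" q Y] by simp

lemma alt1: "(\<Sum>p\<in>{0..a}. of_nat (a choose p) * (-1)^p) = (if a = 0 then 1 else (0::'k::comm_ring_1))"
  using choose_alternating_sum[of a, where 'a='k] by (simp add: atLeast0AtMost mult.commute)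

lemma alt2: "(\<Sum>p\<in>{0..a}. of_nat (a choose p) * (-1)^(a-p)) = (if a = 0 then 1 else (0::'k::comm_ring_1))"
proof -
  have "(\<Sum>p\<in>{0..a}. of_nat (a choose p) * (-1)^(a-p)) = (\<Sum>p\<in>{0..a}. of_nat (a choose (a - p)) * ((-1)^(a-(a-p)) :: 'k))"
    by (subst sum.atLeastAtMost_rev) simp
  also have "\<dots> = (\<Sum>p\<in>{0..a}. of_nat (a choose p) * (-1)^p)"
    by (intro sum.cong refl) (auto simp: binomial_symmetric[symmetric])
  finally show ?thesis by (simp add: alt1)
qed

lemma antipode_left_basis:
  "lin (\<lambda>(v, w). bilin sha_mult_basis (sha_antipode_basis v) (Poly_Mapping.single w 1)) (sha_coprod_basis u) =
   pm_smult (sha_counit_basis u) (sha_unit (1::'k::comm_ring_1))"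
proof -
  obtain a \<alpha> where u: "u = (a, \<alpha>)" by force
  define Q :: "nat \<Rightarrow> _ \<Rightarrow>\<^sub>0 'k" where "Q i = qs (T0 (rev (take i \<alpha>))) (Poly_Mapping.single (drop i \<alpha>) 1)" for i
  have "lin (\<lambda>(v, w). bilin sha_mult_basis (sha_antipode_basis v) (Poly_Mapping.single w 1)) (sha_coprod_basis u) =
    (\<Sum>i\<in>{0..length \<alpha>}. \<Sum>p\<in>{0..a}. pm_smult (of_nat (a choose p) * (-1)^p * (-1)^i) (Emb a (Q i)))"
    unfolding u D_eq
  proof (simp add: lin_sum, intro sum.cong refl)
    fix i p assume i: "i \<in> {0..length \<alpha>}" and p: "p \<in> {0..a}"
    have "Poly_Mapping.single (a - p, drop i \<alpha>) (1::'k) = Emb (a-p) (Poly_Mapping.single (drop i \<alpha>) 1)" by simp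
    then show "pm_smult (of_nat (a choose p)) (bilin sha_mult_basis (sha_antipode_basis (p, take i \<alpha>))
              (Poly_Mapping.single (a - p, drop i \<alpha>) 1)) =
          pm_smult (of_nat (a choose p) * (- 1) ^ p * (- 1) ^ i) (Emb a (Q i))"
      using i p by (simp add: S_eq bilin_smultL mult_Emb_sR Q_def power_add mult.assoc)
  qed
  also have "\<dots> = Emb a (pm_smult (\<Sum>p\<in>{0..a}. of_nat (a choose p) * (-1)^p) (Lsum \<alpha>))"
    by (simp add: Lsum_def Q_def Emb_sum Emb_smult smult_sum_right smult_sum_left sum_distrib_left mult_ac)
  also have "\<dots> = pm_smult (sha_counit_basis u) (sha_unit (1::'k))"
    by (simp add: alt1 u Lsum_Nil Lsum_nonempty sha_counit_basis_def sha_unit_def)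
  finally show ?thesis .
qed

lemma antipode_right_basis:
  "lin (\<lambda>(v, w). bilin sha_mult_basis (Poly_Mapping.single v 1) (sha_antipode_basis w)) (sha_coprod_basis u) =
   pm_smult (sha_counit_basis u) (sha_unit (1::'k::comm_ring_1))"
proof -
  obtain a \<alpha> where u: "u = (a, \<alpha>)" by force
  define Q :: "nat \<Rightarrow> _ \<Rightarrow>\<^sub>0 'k" where "Q i = qs (Poly_Mapping.single (take i \<alpha>) 1) (T0 (rev (drop i \<alpha>)))" for i
  have "lin (\<lambda>(v, w). bilin sha_mult_basis (Poly_Mapping.single v 1) (sha_antipode_basis w)) (sha_coprod_basis u) =
    (\<Sum>i\<in>{0..length \<alpha>}. \<Sum>p\<in>{0..a}. pm_smult (of_nat (a choose p) * (-1)^(a-p) * (-1)^(length \<alpha> - i)) (Emb a (Q i)))"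
    unfolding u D_eq
  proof (simp add: lin_sum, intro sum.cong refl)
    fix i p assume i: "i \<in> {0..length \<alpha>}" and p: "p \<in> {0..a}"
    have "Poly_Mapping.single (p, take i \<alpha>) (1::'k) = Emb p (Poly_Mapping.single (take i \<alpha>) 1)" by simp
    then show "pm_smult (of_nat (a choose p)) (bilin sha_mult_basis (Poly_Mapping.single (p, take i \<alpha>) 1)
              (sha_antipode_basis (a - p, drop i \<alpha>))) =
          pm_smult (of_nat (a choose p) * (- 1) ^ (a - p) * (- 1) ^ (length \<alpha> - i)) (Emb a (Q i))"
    proof -
      have e: "a - p + (length \<alpha> - i) = a + length \<alpha> - (p + i)" using i p by auto
      show ?thesis
        using i p by (simp add: S_eq bilin_smultR mult_Emb_sL Q_def power_add[symmetric] mult.assoc e)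
    qed
  qed
  also have "\<dots> = Emb a (pm_smult (\<Sum>p\<in>{0..a}. of_nat (a choose p) * (-1)^(a-p)) (Rsum \<alpha>))"
    by (simp add: Rsum_def Q_def Emb_sum Emb_smult smult_sum_right smult_sum_left sum_distrib_left mult_ac)
  also have "\<dots> = pm_smult (sha_counit_basis u) (sha_unit (1::'k))"
    by (simp add: alt2 u Rsum_eq sha_counit_basis_def sha_unit_def)
  finally show ?thesis .
qed

lemma counit_mult_basis:
  "slin sha_counit_basis (sha_mult_basis u v :: _ \<Rightarrow>\<^sub>0 'k::comm_ring_1) = sha_counit_basis u * sha_counit_basis v"
proof -
  obtain a x where u: "u = (a, x)" by force
  obtain b y where v: "v = (b, y)" by force
  show ?thesis
  proof (cases "x = [] \<and> y = []")
    case True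
    then show ?thesis by (simp add: u v M_eq' slin_mset_pm sha_counit_basis_def)
  next
    case False
    have "image_mset (\<lambda>\<gamma>. sha_counit_basis (a+b, \<gamma>)) (msh x y) = image_mset (\<lambda>_. 0::'k) (msh x y)"
      by (rule image_mset_cong) (use False msh_Nil_mem in \<open>auto simp: sha_counit_basis_def\<close>)
    then show ?thesis using False
      by (simp add: u v M_eq' slin_mset_pm sha_counit_basis_def image_mset.compositionality o_def)
  qed
qed


lemma slin_cong: "(\<And>u. u \<in> Poly_Mapping.keys f \<Longrightarrow> F u = G u) \<Longrightarrow> slin F f = slin G f"
  unfolding slin_def by simp
lemma slin_fun_multL: "slin (\<lambda>u. F u * c) f = slin F f * c"
  unfolding slin_def by (simp add: sum_distrib_right mult.assoc)
lemma slin_fun_multR: "slin (\<lambda>u. c * F u) f = c * slin F f"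
  unfolding slin_def by (simp add: sum_distrib_left mult_ac)
lemma smult_slin: "pm_smult (slin E f) X = lin (\<lambda>w. pm_smult (E w) X) f"
  unfolding slin_def lin_def by (simp add: smult_sum_left)

lemma tmap_lin: "tmap F G (lin H f) = lin (\<lambda>w. tmap F G (H w)) f"
  by (simp add: tmap_def lin_comp)
lemma assoc_iso_lin: "assoc_iso (lin H f) = lin (\<lambda>w. assoc_iso (H w)) f"
  by (simp add: assoc_iso_def lin_comp)

theorem corollary4p6:
  assumes "\<And>n::nat. n > 0 \<Longrightarrow> \<exists>y::'k::comm_ring_1. of_nat n * y = 1"
  shows "is_hopf_algebra sha_mult_basis (sha_unit (1::'k))
           sha_coprod_basis sha_counit_basis sha_antipode_basis"
proof -
  let ?M = "sha_mult_basis :: _ \<Rightarrow> _ \<Rightarrow> _ \<Rightarrow>\<^sub>0 'k"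
  let ?D = "sha_coprod_basis :: _ \<Rightarrow> _ \<Rightarrow>\<^sub>0 'k"
  let ?E = "sha_counit_basis :: _ \<Rightarrow> 'k"
  let ?S = "sha_antipode_basis :: _ \<Rightarrow> _ \<Rightarrow>\<^sub>0 'k"
  let ?e = "sha_unit (1::'k)"
  have e: "?e = Poly_Mapping.single (0, []) 1" by (simp add: sha_unit_def)
  have eps: "(\<lambda>f. \<Sum>u\<in>Poly_Mapping.keys f. Poly_Mapping.lookup f u * ?E u) = slin ?E"
    by (rule ext) (simp add: slin_def)
  have A1: "bilin ?M (bilin ?M f g) h = bilin ?M f (bilin ?M g h)" for f g h
    by (rule bilin_assoc_basis) (rule sha_assoc_basis)
  have M0L: "?M (0, []) = (\<lambda>v. Poly_Mapping.single v 1)"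
    by (rule ext) (auto simp: M_eq')
  have M0R: "?M u (0, []) = Poly_Mapping.single u 1" for u
    by (cases u) (simp add: M_eq')
  have A2: "bilin ?M ?e f = f \<and> bilin ?M f ?e = f" for f
    by (simp add: e bilin_lin M0L M0R)
  have A3: "assoc_iso (tmap ?D (\<lambda>w. Poly_Mapping.single w 1) (lin ?D f)) = tmap (\<lambda>w. Poly_Mapping.single w 1) ?D (lin ?D f)" for f
    by (simp add: tmap_lin assoc_iso_lin coassoc_basis)
  have A4: "lin (\<lambda>(v, w). pm_smult (?E v) ((\<lambda>w. Poly_Mapping.single w 1) w)) (lin ?D f) = f \<and>
        lin (\<lambda>(v, w). pm_smult (?E w) ((\<lambda>w. Poly_Mapping.single w 1) v)) (lin ?D f) = f" for f
    by (simp only: lin_comp counit_basis1 counit_basis2 lin_id simp_thms)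
  have A5: "lin ?D (bilin ?M f g) = bilin (tens_mult_basis ?M) (lin ?D f) (lin ?D g)" for f g
  proof -
    have "lin ?D (bilin ?M f g) = lin (\<lambda>u. lin (\<lambda>v. lin ?D (?M u v)) g) f"
      by (simp add: bilin_lin lin_comp)
    also have "\<dots> = lin (\<lambda>u. lin (\<lambda>v. bilin (tens_mult_basis ?M) (?D u) (?D v)) g) f"
      by (simp add: compat_basis)
    also have "\<dots> = lin (\<lambda>u. lin (\<lambda>v. lin (\<lambda>X. lin (tens_mult_basis ?M X) (?D v)) (?D u)) g) f"
      by (simp add: bilin_lin)
    also have "\<dots> = lin (\<lambda>u. lin (\<lambda>X. lin (\<lambda>v. lin (tens_mult_basis ?M X) (?D v)) g) (?D u)) f"
      by (subst lin_swap) (rule refl)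
    also have "\<dots> = bilin (tens_mult_basis ?M) (lin ?D f) (lin ?D g)"
      by (simp add: bilin_lin lin_comp)
    finally show ?thesis .
  qed
  have A6: "lin ?D ?e = tens ?e ?e"
    by (simp add: e D_eq tens_single_left)
  have A7: "slin ?E (bilin ?M f g) = slin ?E f * slin ?E g" for f g
  proof -
    have "slin ?E (bilin ?M f g) = slin (\<lambda>u. slin (\<lambda>v. slin ?E (?M u v)) g) f"
      by (simp add: bilin_lin slin_comp)
    also have "\<dots> = slin (\<lambda>u. ?E u * slin ?E g) f"
      by (simp only: counit_mult_basis slin_fun_multR)
    also have "\<dots> = slin ?E f * slin ?E g"
      by (rule slin_fun_multL)
    finally show ?thesis .
  qed
  have A8: "slin ?E ?e = 1"
    by (simp add: e sha_counit_basis_def)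
  have A9: "lin (\<lambda>(v, w). bilin ?M (?S v) ((\<lambda>w. Poly_Mapping.single w 1) w)) (lin ?D f) = pm_smult (slin ?E f) ?e \<and>
        lin (\<lambda>(v, w). bilin ?M ((\<lambda>w. Poly_Mapping.single w 1) v) (?S w)) (lin ?D f) = pm_smult (slin ?E f) ?e" for f
    by (simp add: lin_comp antipode_left_basis antipode_right_basis smult_slin)
  show ?thesis
    unfolding is_hopf_algebra_def Let_def eps
    using A1 A2 A3 A4 A5 A6 A7 A8 A9 by blast
qed


end
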